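(* Let $\mathcal{L}:\mathbb{R}^d\to\mathbb{R}$, $\mu>0$, $\theta\in\mathbb{R}^d$, $K\ge1$ an integer, $C>0$, and $p$ a probability vector on $\{1,\dots,L\}$ with all entries positive. Let $z\sim\mathcal{N}(0,I_d)$ and, independently, $(N_1,\dots,N_L)\sim\mathrm{Multinomial}(K,p)$. Define the clipped AdaLeZO estimator blockwise by $$\tilde g^{\mathrm{Ada},(l)}=\min\!\Big(\frac{1}{K p(l)},\,C\Big)\,N_l\,\hat g^{\mathrm{ZO},(l)}(\theta;z).$$ Then $$\mathbb{E}\big[\|\tilde g^{\mathrm{Ada}}\|^2\big]\le (C+1)\,\mathbb{E}\big[\|\hat g^{\mathrm{ZO}}(\theta;z)\|^2\big].$$
   Context: The parameter vector $\theta\in\mathbb{R}^d$ is partitioned into $L$ blocks ("layers") $\theta=(\theta^{(1)},\dots,\theta^{(L)})$ with $\theta^{(l)}\in\mathbb{R}^{d_l}$, $\sum_l d_l=d$; for any $v\in\mathbb{R}^d$, $v^{(l)}$ denotes its $l$-th block. The dense symmetric zeroth-order estimator is $\hat g^{\mathrm{ZO}}(\theta;z)=\frac{\mathcal{L}(\theta+\mu z)-\mathcal{L}(\theta-\mu z)}{2\mu}\,z$ for $z\in\mathbb{R}^d$. $\mathrm{Multinomial}(K,p)$ denotes the counts $N_l$ of the value $l$ among $K$ i.i.d. draws from $p$. Norms are Euclidean; expectations may be $+\infty$. *)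

theory Defs
  imports "HOL-Probability.Probability"
begin

text \<open>Coordinates of R^d are indexed by pairs (l, j) with l in {1..L} (the block /
layer) and j < d_l (position inside the block), so d = sum of the d_l and the
l-th block v^(l) of a vector v consists of the coordinates (l, j).\<close>

definition coords :: "nat \<Rightarrow> (nat \<Rightarrow> nat) \<Rightarrow> (nat \<times> nat) set" where
  "coords L ds = {(l, j). l \<in> {1..L} \<and> j < ds l}"

definition sqnorm :: "(nat \<times> nat) set \<Rightarrow> ((nat \<times> nat) \<Rightarrow> real) \<Rightarrow> real" where
  "sqnorm I v = (\<Sum>i\<in>I. (v i)\<^sup>2)"

definition gauss :: "(nat \<times> nat) set \<Rightarrow> ((nat \<times> nat) \<Rightarrow> real) measure" where
  "gauss I = PiM I (\<lambda>_. std_normal_distribution)"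

definition draws :: "nat \<Rightarrow> nat pmf \<Rightarrow> (nat \<Rightarrow> nat) measure" where
  "draws K P = PiM {..<K} (\<lambda>_. measure_pmf P)"

text \<open>Multinomial counts: N_l = number of draws equal to l.\<close>
definition count_draws :: "nat \<Rightarrow> (nat \<Rightarrow> nat) \<Rightarrow> nat \<Rightarrow> nat" where
  "count_draws K \<omega> l = card {k \<in> {..<K}. \<omega> k = l}"

definition gZO :: "(((nat \<times> nat) \<Rightarrow> real) \<Rightarrow> real) \<Rightarrow> real \<Rightarrow> ((nat \<times> nat) \<Rightarrow> real)
    \<Rightarrow> ((nat \<times> nat) \<Rightarrow> real) \<Rightarrow> ((nat \<times> nat) \<Rightarrow> real)" where
  "gZO Loss \<mu> \<theta> z = (\<lambda>i. (Loss (\<lambda>k. \<theta> k + \<mu> * z k) - Loss (\<lambda>k. \<theta> k - \<mu> * z k)) / (2 * \<mu>) * z i)"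

definition gAda_clip :: "(((nat \<times> nat) \<Rightarrow> real) \<Rightarrow> real) \<Rightarrow> real \<Rightarrow> ((nat \<times> nat) \<Rightarrow> real)
    \<Rightarrow> nat \<Rightarrow> nat pmf \<Rightarrow> real \<Rightarrow> ((nat \<times> nat) \<Rightarrow> real) \<Rightarrow> (nat \<Rightarrow> nat)
    \<Rightarrow> ((nat \<times> nat) \<Rightarrow> real)" where
  "gAda_clip Loss \<mu> \<theta> K P C z \<omega> = (\<lambda>(l, j).
      min (1 / (real K * pmf P l)) C * real (count_draws K \<omega> l) * gZO Loss \<mu> \<theta> z (l, j))"

end

theory Submission
  imports Defs
begin


lemma nn_fst_le:
  assumes "sigma_finite_measure M2"
  shows "(\<integral>\<^sup>+ x. f x \<partial>(M1 \<Otimes>\<^sub>M M2)) \<le> (\<integral>\<^sup>+ x. \<integral>\<^sup>+ y. f (x,y) \<partial>M2 \<partial>M1)"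
  unfolding nn_integral_def[of "M1 \<Otimes>\<^sub>M M2" f]
proof (rule SUP_least, clarify)
  fix g assume g: "simple_function (M1 \<Otimes>\<^sub>M M2) g" "g \<le> f"
  have gm: "g \<in> borel_measurable (M1 \<Otimes>\<^sub>M M2)" using g(1) by (rule borel_measurable_simple_function)
  have "integral\<^sup>S (M1 \<Otimes>\<^sub>M M2) g = integral\<^sup>N (M1 \<Otimes>\<^sub>M M2) g"
    using g(1) by (simp add: nn_integral_eq_simple_integral)
  also have "\<dots> = (\<integral>\<^sup>+ x. \<integral>\<^sup>+ y. g (x,y) \<partial>M2 \<partial>M1)"
    using sigma_finite_measure.nn_integral_fst[OF assms gm] by simp
  also have "\<dots> \<le> (\<integral>\<^sup>+ x. \<integral>\<^sup>+ y. f (x,y) \<partial>M2 \<partial>M1)"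
    using g(2) by (intro nn_integral_mono) (auto simp: le_fun_def)
  finally show "integral\<^sup>S (M1 \<Otimes>\<^sub>M M2) g \<le> (\<integral>\<^sup>+ x. \<integral>\<^sup>+ y. f (x,y) \<partial>M2 \<partial>M1)" .
qed

lemma nn_cmult_le:
  fixes c :: ennreal
  assumes "0 < c" "c < top"
  shows "(\<integral>\<^sup>+ x. c * f x \<partial>M) \<le> c * (\<integral>\<^sup>+ x. f x \<partial>M)"
  unfolding nn_integral_def[of M "\<lambda>x. c * f x"]
proof (rule SUP_least, clarify)
  fix g assume g: "simple_function M g" "g \<le> (\<lambda>x. c * f x)"
  define h where "h = (\<lambda>x. g x / c)"
  have hs: "simple_function M h" unfolding h_def using g(1) by (rule simple_function_compose1)
  have hm: "h \<in> borel_measurable M" using hs by (rule borel_measurable_simple_function)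
  have gh: "g x = c * h x" for x
    unfolding h_def using assms
    by (metis ennreal_times_divide mult.commute mult_divide_eq_ennreal order.strict_iff_not not_gr_zero top.not_eq_extremum)
  have hf: "h x \<le> f x" for x
  proof -
    have "g x \<le> c * f x" using g(2) by (auto simp: le_fun_def)
    then show ?thesis unfolding h_def using assms
      by (metis divide_right_mono_ennreal mult.commute mult_divide_eq_ennreal order.strict_iff_not not_gr_zero top.not_eq_extremum)
  qed
  have "integral\<^sup>S M g = integral\<^sup>N M g"
    using g(1) by (simp add: nn_integral_eq_simple_integral)
  also have "\<dots> = (\<integral>\<^sup>+ x. c * h x \<partial>M)" using gh by (metis)
  also have "\<dots> = c * integral\<^sup>N M h" using hm by (rule nn_integral_cmult)
  also have "\<dots> \<le> c * (\<integral>\<^sup>+ x. f x \<partial>M)"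
    by (intro mult_left_mono nn_integral_mono hf) auto
  finally show "integral\<^sup>S M g \<le> c * (\<integral>\<^sup>+ x. f x \<partial>M)" .
qed



lemma pmf_meas: "f \<in> borel_measurable (measure_pmf P)"
  by (simp add: measurable_def)

lemma real_bound:
  fixes x C :: real
  assumes "x > 0" "C > 0"
  shows "(min (1/x) C)\<^sup>2 * (x + x\<^sup>2) \<le> C + 1"
proof -
  define c where "c = min (1/x) C"
  have c0: "c > 0" using assms by (simp add: c_def)
  have cC: "c \<le> C" by (simp add: c_def)
  have "c * x \<le> (1/x) * x" using assms by (intro mult_right_mono) (auto simp: c_def)
  then have cx: "c * x \<le> 1" using assms by simp
  have "c\<^sup>2 * x = c * (c * x)" by (simp add: power2_eq_square)
  also have "\<dots> \<le> c * 1" using cx c0 by (intro mult_left_mono) auto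
  finally have 1: "c\<^sup>2 * x \<le> C" using cC by simp
  have "c\<^sup>2 * x\<^sup>2 = (c * x)\<^sup>2" by (simp add: power_mult_distrib)
  also have "\<dots> \<le> 1" using cx c0 assms by (intro power_le_one) auto
  finally have 2: "c\<^sup>2 * x\<^sup>2 \<le> 1" .
  show ?thesis using 1 2 by (simp add: c_def[symmetric] distrib_left)
qed

lemma E_count_sq:
  "(\<integral>\<^sup>+\<omega>. ennreal ((real (count_draws K \<omega> l))\<^sup>2) \<partial>draws K P)
     \<le> ennreal (real K * pmf P l + (real K * pmf P l)\<^sup>2)"
proof -
  interpret product_sigma_finite "\<lambda>_. measure_pmf P"
    by (simp add: product_sigma_finite_def prob_space_imp_sigma_finite measure_pmf.prob_space_axioms)
  define p where "p = pmf P l"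
  define f where "f k k' i v = ennreal (if i \<in> {k,k'} then indicator {l} v else 1)" for k k' i :: nat and v :: nat
  have eq: "ennreal ((real (count_draws K \<omega> l))\<^sup>2) = (\<Sum>k<K. \<Sum>k'<K. \<Prod>i<K. f k k' i (\<omega> i))" for \<omega>
  proof -
    have c: "real (count_draws K \<omega> l) = (\<Sum>k<K. indicator {l} (\<omega> k))"
      unfolding count_draws_def by (simp add: sum.If_cases indicator_def Int_def conj_commute)
    have pr: "(\<Prod>i<K. (if i \<in> {k,k'} then indicator {l} (\<omega> i) else 1::real)) = indicator {l} (\<omega> k) * indicator {l} (\<omega> k')"
      if "k < K" "k' < K" for k k'
    proof -
      have "(\<Prod>i<K. (if i \<in> {k,k'} then indicator {l} (\<omega> i) else 1::real)) = (\<Prod>i\<in>{..<K} \<inter> {k,k'}. indicator {l} (\<omega> i))"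
        by (simp add: prod.inter_restrict)
      also have "{..<K} \<inter> {k,k'} = {k,k'}" using that by auto
      finally show ?thesis by (cases "k = k'") (auto simp: indicator_def)
    qed
    have "(real (count_draws K \<omega> l))\<^sup>2 = (\<Sum>k<K. \<Sum>k'<K. indicator {l} (\<omega> k) * indicator {l} (\<omega> k'))"
      unfolding c power2_eq_square by (simp add: sum_product)
    also have "\<dots> = (\<Sum>k<K. \<Sum>k'<K. \<Prod>i<K. (if i \<in> {k,k'} then indicator {l} (\<omega> i) else 1::real))"
      by (intro sum.cong refl) (rule pr[symmetric]; simp)
    finally show ?thesis unfolding f_def
      by (simp add: sum_nonneg prod_nonneg prod_ennreal)
  qed
  have ind: "(\<integral>\<^sup>+ v. ennreal (indicator {l} v) \<partial>measure_pmf P) = ennreal (pmf P l)"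
    by (subst ennreal_indicator, subst nn_integral_indicator) (auto simp: emeasure_pmf_single)
  have int1: "(\<integral>\<^sup>+ v. f k k' i v \<partial>measure_pmf P) = ennreal (if i \<in> {k,k'} then p else 1)" for k k' i
    unfolding f_def p_def
    by (cases "i \<in> {k,k'}") (simp_all add: emeasure_pmf_single measure_pmf.emeasure_space_1 ind del: insert_iff)
  have "(\<integral>\<^sup>+\<omega>. ennreal ((real (count_draws K \<omega> l))\<^sup>2) \<partial>draws K P)
      = (\<integral>\<^sup>+\<omega>. (\<Sum>k<K. \<Sum>k'<K. \<Prod>i<K. f k k' i (\<omega> i)) \<partial>draws K P)"
    by (simp add: eq)
  also have "\<dots> = (\<Sum>k<K. \<Sum>k'<K. \<integral>\<^sup>+\<omega>. (\<Prod>i<K. f k k' i (\<omega> i)) \<partial>draws K P)"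
    unfolding draws_def
    apply (subst nn_integral_sum)
     apply (simp add: pmf_meas)
    apply (intro sum.cong refl)
    apply (subst nn_integral_sum)
     apply (simp add: pmf_meas)
    apply simp
    done
  also have "\<dots> = (\<Sum>k<K. \<Sum>k'<K. ennreal (\<Prod>i<K. if i \<in> {k,k'} then p else 1))"
    unfolding draws_def
    by (simp add: product_nn_integral_prod pmf_meas int1 prod_ennreal p_def)
  also have "\<dots> \<le> (\<Sum>k<K. \<Sum>k'<K. ennreal (p\<^sup>2 + (if k = k' then p else 0)))"
  proof (intro sum_mono ennreal_leI)
    fix k k' assume "k \<in> {..<K}" "k' \<in> {..<K}"
    then have "(\<Prod>i<K. if i \<in> {k,k'} then p else 1) = (\<Prod>i\<in>{k,k'}. p)"
      by (subst prod.inter_restrict[symmetric]) (auto intro!: prod.cong)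
    moreover have "p \<ge> 0" "p \<le> 1" by (auto simp: p_def pmf_le_1)
    ultimately show "(\<Prod>i<K. if i \<in> {k,k'} then p else 1) \<le> p\<^sup>2 + (if k = k' then p else 0)"
      by (cases "k = k'") (auto simp: power2_eq_square)
  qed
  also have "\<dots> = ennreal (real K * p + (real K * p)\<^sup>2)"
  proof -
    have "p \<ge> 0" by (simp add: p_def)
    then have "(\<Sum>k<K. \<Sum>k'<K. ennreal (p\<^sup>2 + (if k = k' then p else 0)))
        = ennreal (\<Sum>k<K. \<Sum>k'<K. (p\<^sup>2 + (if k = k' then p else 0)))"
      by (simp add: sum_nonneg del: ennreal_plus)
    also have "(\<Sum>k<K. \<Sum>k'<K. (p\<^sup>2 + (if k = k' then p else 0))) = real K * p + (real K * p)\<^sup>2"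
      by (simp add: sum.distrib power_mult_distrib power2_eq_square algebra_simps)
    finally show ?thesis .
  qed
  finally show ?thesis by (simp add: p_def)
qed


theorem mainTheorem4:
  fixes L K :: nat and ds :: "nat \<Rightarrow> nat"
    and Loss :: "((nat \<times> nat) \<Rightarrow> real) \<Rightarrow> real"
    and \<mu> C :: real and \<theta> :: "(nat \<times> nat) \<Rightarrow> real" and P :: "nat pmf"
  assumes "L \<ge> 1"
    and "Loss \<in> borel_measurable (PiM (coords L ds) (\<lambda>_. borel))"
    and "\<mu> > 0" and "K \<ge> 1" and "C > 0"
    and "\<theta> \<in> extensional (coords L ds)"
    and "set_pmf P = {1..L}"
  shows "(\<integral>\<^sup>+ x. ennreal (sqnorm (coords L ds) (gAda_clip Loss \<mu> \<theta> K P C (fst x) (snd x)))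
            \<partial>(gauss (coords L ds) \<Otimes>\<^sub>M draws K P))
         \<le> ennreal (C + 1) * (\<integral>\<^sup>+ z. ennreal (sqnorm (coords L ds) (gZO Loss \<mu> \<theta> z)) \<partial>gauss (coords L ds))"
proof -
  define I where "I = coords L ds"
  define cl where "cl l = min (1 / (real K * pmf P l)) C" for l
  define A where "A l \<omega> = ennreal ((cl l)\<^sup>2 * (real (count_draws K \<omega> l))\<^sup>2)" for l \<omega>
  have sf: "sigma_finite_measure (draws K P)"
    unfolding draws_def
    by (intro prob_space_imp_sigma_finite prob_space_PiM measure_pmf.prob_space_axioms)
  have Ameas: "A l \<in> borel_measurable (draws K P)" for l
    unfolding A_def draws_def count_draws_def by measurable
  have Abound: "(\<integral>\<^sup>+\<omega>. A l \<omega> \<partial>draws K P) \<le> ennreal (C + 1)" if "l \<in> {1..L}" for l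
  proof -
    have p: "pmf P l > 0" using that assms(7) by (simp add: pmf_positive)
    have x: "real K * pmf P l > 0" using p assms(4) by simp
    have "(\<integral>\<^sup>+\<omega>. A l \<omega> \<partial>draws K P) = ennreal ((cl l)\<^sup>2) * (\<integral>\<^sup>+\<omega>. ennreal ((real (count_draws K \<omega> l))\<^sup>2) \<partial>draws K P)"
      unfolding A_def
      by (subst nn_integral_cmult[symmetric]) (auto simp: ennreal_mult draws_def count_draws_def)
    also have "\<dots> \<le> ennreal ((cl l)\<^sup>2) * ennreal (real K * pmf P l + (real K * pmf P l)\<^sup>2)"
      by (intro mult_left_mono E_count_sq) auto
    also have "\<dots> = ennreal ((cl l)\<^sup>2 * (real K * pmf P l + (real K * pmf P l)\<^sup>2))"
      using x by (simp add: ennreal_mult)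
    also have "\<dots> \<le> ennreal (C + 1)"
      unfolding cl_def using real_bound[OF x assms(5)] by (intro ennreal_leI) simp
    finally show ?thesis .
  qed
  have finI: "finite I"
  proof -
    have "I \<subseteq> {1..L} \<times> {..<Max (ds ` {1..L})}"
    proof
      fix i assume "i \<in> I"
      then obtain l j where i: "i = (l,j)" "l \<in> {1..L}" "j < ds l" by (auto simp: I_def coords_def)
      have "ds l \<le> Max (ds ` {1..L})" using i by (intro Max_ge) auto
      then have "j < Max (ds ` {1..L})" using i(3) by linarith
      then show "i \<in> {1..L} \<times> {..<Max (ds ` {1..L})}" using i by simp
    qed
    then show ?thesis by (rule finite_subset) auto
  qed
  have inner: "(\<integral>\<^sup>+\<omega>. ennreal (sqnorm I (gAda_clip Loss \<mu> \<theta> K P C z \<omega>)) \<partial>draws K P)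
      \<le> ennreal (C + 1) * ennreal (sqnorm I (gZO Loss \<mu> \<theta> z))" for z
  proof -
    have pt: "ennreal (sqnorm I (gAda_clip Loss \<mu> \<theta> K P C z \<omega>))
        = (\<Sum>i\<in>I. A (fst i) \<omega> * ennreal ((gZO Loss \<mu> \<theta> z i)\<^sup>2))" for \<omega>
    proof -
      have eq1: "sqnorm I (gAda_clip Loss \<mu> \<theta> K P C z \<omega>)
          = (\<Sum>i\<in>I. ((cl (fst i))\<^sup>2 * (real (count_draws K \<omega> (fst i)))\<^sup>2) * (gZO Loss \<mu> \<theta> z i)\<^sup>2)"
        unfolding sqnorm_def gAda_clip_def cl_def
        by (intro sum.cong refl) (auto simp: power_mult_distrib split: prod.splits)
      have "ennreal (sqnorm I (gAda_clip Loss \<mu> \<theta> K P C z \<omega>)) = (\<Sum>i\<in>I. ennreal (((cl (fst i))\<^sup>2 * (real (count_draws K \<omega> (fst i)))\<^sup>2) * (gZO Loss \<mu> \<theta> z i)\<^sup>2))"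
        unfolding eq1 by (rule sum_ennreal[symmetric]) simp
      also have "\<dots> = (\<Sum>i\<in>I. A (fst i) \<omega> * ennreal ((gZO Loss \<mu> \<theta> z i)\<^sup>2))"
        unfolding A_def by (intro sum.cong refl ennreal_mult) auto
      finally show ?thesis .
    qed
    have "(\<integral>\<^sup>+\<omega>. ennreal (sqnorm I (gAda_clip Loss \<mu> \<theta> K P C z \<omega>)) \<partial>draws K P)
        = (\<Sum>i\<in>I. (\<integral>\<^sup>+\<omega>. A (fst i) \<omega> \<partial>draws K P) * ennreal ((gZO Loss \<mu> \<theta> z i)\<^sup>2))"
      unfolding pt
      by (subst nn_integral_sum) (auto simp: Ameas nn_integral_multc intro!: borel_measurable_times_ennreal)
    also have "\<dots> \<le> (\<Sum>i\<in>I. ennreal (C + 1) * ennreal ((gZO Loss \<mu> \<theta> z i)\<^sup>2))"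
    proof (intro sum_mono mult_right_mono Abound)
      fix i assume "i \<in> I" then show "fst i \<in> {1..L}" by (auto simp: I_def coords_def)
    qed auto
    also have "\<dots> = ennreal (C + 1) * ennreal (sqnorm I (gZO Loss \<mu> \<theta> z))"
      unfolding sqnorm_def by (simp add: sum_distrib_left[symmetric])
    finally show ?thesis .
  qed
  have "(\<integral>\<^sup>+ x. ennreal (sqnorm I (gAda_clip Loss \<mu> \<theta> K P C (fst x) (snd x))) \<partial>(gauss I \<Otimes>\<^sub>M draws K P))
      \<le> (\<integral>\<^sup>+ z. \<integral>\<^sup>+ \<omega>. ennreal (sqnorm I (gAda_clip Loss \<mu> \<theta> K P C z \<omega>)) \<partial>draws K P \<partial>gauss I)"
    by (rule order_trans[OF nn_fst_le[OF sf]]) simp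
  also have "\<dots> \<le> (\<integral>\<^sup>+ z. ennreal (C + 1) * ennreal (sqnorm I (gZO Loss \<mu> \<theta> z)) \<partial>gauss I)"
    by (intro nn_integral_mono inner)
  also have "\<dots> \<le> ennreal (C + 1) * (\<integral>\<^sup>+ z. ennreal (sqnorm I (gZO Loss \<mu> \<theta> z)) \<partial>gauss I)"
    using assms(5) by (intro nn_cmult_le) (auto simp del: ennreal_plus)
  finally show ?thesis unfolding I_def .
qed

end
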